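(* There exists a constant $\widehat c>0$ such that for all $N$ large enough and all $n\in\mathbb{Z}_+$, $$\|\check\pi-\zeta\|_{\mathrm{tv}}\le\frac{5\cdot 2^N n}{N!}+2e^{1-\widehat c n/N^3}.$$ Consequently $\limsup_{N\to\infty}\frac{1}{N\ln N}\ln\|\check\pi-\zeta\|_{\mathrm{tv}}\le -1$.
   Context: Let $\pi_N$ be the law of the number of fixed points of a uniform random permutation of $\{1,\dots,N\}$, $\check\pi$ the law $\pi_N$ conditioned on $\{0,\dots,N-4\}$, and $\zeta$ the Poisson law of parameter 1 conditioned on $\{0,\dots,N-4\}$. $\|\mu-\mu'\|_{\mathrm{tv}}=\sup_A|\mu(A)-\mu'(A)|$. *)

theory Defs
  imports "HOL-Probability.Probability"
begin

definition fixpt_pmf :: "nat \<Rightarrow> nat pmf" where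
  "fixpt_pmf N = map_pmf (\<lambda>\<sigma>. card {i \<in> {1..N}. \<sigma> i = i})
                   (pmf_of_set {\<sigma> :: nat \<Rightarrow> nat. \<sigma> permutes {1..N}})"

definition fixpt_cond_pmf :: "nat \<Rightarrow> nat pmf" where
  "fixpt_cond_pmf N = cond_pmf (fixpt_pmf N) {0..N - 4}"

definition poisson_cond_pmf :: "nat \<Rightarrow> nat pmf" where
  "poisson_cond_pmf N = cond_pmf (poisson_pmf 1) {0..N - 4}"

definition tv_dist :: "'a pmf \<Rightarrow> 'a pmf \<Rightarrow> real" where
  "tv_dist p q = (SUP A. \<bar>measure_pmf.prob p A - measure_pmf.prob q A\<bar>)"

end

theory Submission
  imports Defs "HOL-Real_Asymp.Real_Asymp"
begin


definition ss :: "nat \<Rightarrow> real" where "ss n = (\<Sum>j\<le>n. (-1)^j / fact j)"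
definition der :: "'a set \<Rightarrow> nat" where
  "der A = card {\<sigma>. \<sigma> permutes A \<and> (\<forall>x\<in>A. \<sigma> x \<noteq> x)}"

lemma fix_eq:
  assumes "F \<subseteq> A"
  shows "{\<sigma>. \<sigma> permutes A \<and> {x\<in>A. \<sigma> x = x} = F} = {\<sigma>. \<sigma> permutes (A-F) \<and> (\<forall>x\<in>A-F. \<sigma> x \<noteq> x)}"
  using assms unfolding permutes_def by auto

lemma part:
  assumes "finite A"
  shows "card {\<sigma>. \<sigma> permutes A \<and> P (card {x\<in>A. \<sigma> x = x})} = (\<Sum>F\<in>{F. F \<subseteq> A \<and> P (card F)}. der (A - F))"
proof -
  let ?I = "{F. F \<subseteq> A \<and> P (card F)}"
  let ?B = "\<lambda>F. {\<sigma>. \<sigma> permutes A \<and> {x\<in>A. \<sigma> x = x} = F}"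
  have eq: "{\<sigma>. \<sigma> permutes A \<and> P (card {x\<in>A. \<sigma> x = x})} = (\<Union>F\<in>?I. ?B F)" by auto
  have fI: "finite ?I" using assms by (simp add: finite_subset)
  have fB: "\<forall>F\<in>?I. finite (?B F)"
    using finite_permutations[OF assms] by (auto intro: finite_subset)
  have "card (\<Union>F\<in>?I. ?B F) = (\<Sum>F\<in>?I. card (?B F))"
    by (rule card_UN_disjoint[OF fI fB]) auto
  also have "\<dots> = (\<Sum>F\<in>?I. der (A - F))"
    by (rule sum.cong) (auto simp: der_def fix_eq)
  finally show ?thesis using eq by simp
qed

lemma sum_pow_card:
  assumes "finite A"
  shows "(\<Sum>F\<in>Pow A. g (card F)) = (\<Sum>k\<le>card A. real (card A choose k) * (g k :: real))"
proof -
  have inner: "sum (\<lambda>F. g (card F)) {F \<in> Pow A. card F = k} = real (card A choose k) * g k" for k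
  proof -
    have "sum (\<lambda>F. g (card F)) {F \<in> Pow A. card F = k} = sum (\<lambda>F. g k) {F \<in> Pow A. card F = k}"
      by (rule sum.cong) auto
    also have "\<dots> = real (card {B. B \<subseteq> A \<and> card B = k}) * g k" by simp
    also have "\<dots> = real (card A choose k) * g k" by (simp only: n_subsets[OF assms])
    finally show ?thesis .
  qed
  have "(\<Sum>F\<in>Pow A. g (card F)) = (\<Sum>k\<le>card A. sum (\<lambda>F. g (card F)) {F \<in> Pow A. card F = k})"
    by (rule sum.group[symmetric]) (use assms card_mono in auto)
  also have "\<dots> = (\<Sum>k\<le>card A. real (card A choose k) * (g k :: real))"
    by (intro sum.cong refl inner)
  finally show ?thesis .
qed

lemma alt_binom: "(\<Sum>k\<le>m. (-1)^(m-k) / (fact k * fact (m-k)) :: real) = (if m = 0 then 1 else 0)"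
proof -
  have "(1 + (-1::real))^m = (\<Sum>k\<le>m. real (m choose k) * 1^k * (-1)^(m-k))"
    by (rule binomial_ring)
  also have "\<dots> = (\<Sum>k\<le>m. fact m * ((-1)^(m-k) / (fact k * fact (m-k))))"
    by (rule sum.cong) (auto simp: binomial_fact)
  also have "\<dots> = fact m * (\<Sum>k\<le>m. (-1)^(m-k) / (fact k * fact (m-k)))"
    by (simp add: sum_distrib_left)
  finally have "fact m * (\<Sum>k\<le>m. (-1)^(m-k) / (fact k * fact (m-k)) :: real) = 0^m" by simp
  then show ?thesis by (cases m) auto
qed

lemma ss_Suc: "ss (Suc m) = ss m + (-1)^(Suc m) / fact (Suc m)"
  by (simp add: ss_def)

lemma h_one: "(\<Sum>k\<le>n. ss (n-k) / fact k) = 1"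
proof (induction n)
  case 0 then show ?case by (simp add: ss_def)
next
  case (Suc n)
  have "(\<Sum>k\<le>Suc n. ss (Suc n - k) / fact k) = (\<Sum>k\<le>n. ss (Suc n - k) / fact k) + 1 / fact (Suc n)"
    by (simp add: ss_def)
  also have "(\<Sum>k\<le>n. ss (Suc n - k) / fact k) = (\<Sum>k\<le>n. ss (n - k) / fact k) + (\<Sum>k\<le>n. (-1)^(Suc n - k) / (fact k * fact (Suc n - k)))"
  proof (subst sum.distrib[symmetric], rule sum.cong)
    fix k assume "k \<in> {..n}"
    then have e: "Suc n - k = Suc (n-k)" by auto
    show "ss (Suc n - k) / fact k = ss (n - k) / fact k + (- 1) ^ (Suc n - k) / (fact k * fact (Suc n - k))"
      unfolding e ss_Suc by (simp add: add_divide_distrib del: fact_Suc power_Suc)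
  qed simp
  also have "(\<Sum>k\<le>n. (-1)^(Suc n - k) / (fact k * fact (Suc n - k)) :: real) = - 1 / fact (Suc n)"
    using alt_binom[of "Suc n"] by (simp add: sum.atMost_Suc)
  finally show ?case using Suc by simp
qed

lemma L5: "(\<Sum>k\<le>n. real (n choose k) * (fact (n-k) * ss (n-k))) = fact n"
proof -
  have "(\<Sum>k\<le>n. real (n choose k) * (fact (n-k) * ss (n-k))) = (\<Sum>k\<le>n. fact n * (ss (n-k) / fact k))"
    by (rule sum.cong) (auto simp: binomial_fact)
  also have "\<dots> = fact n * (\<Sum>k\<le>n. ss (n-k) / fact k)" by (rule sum_distrib_left[symmetric])
  also have "\<dots> = fact n" using h_one[of n] by simp
  finally show ?thesis .
qed

lemma der_formula: "finite A \<Longrightarrow> real (der A) = fact (card A) * ss (card A)"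
proof (induction "card A" arbitrary: A rule: less_induct)
  case less
  let ?n = "card A"
  define g where "g k = fact (?n - k) * ss (?n - k)" for k
  have "card {\<sigma>. \<sigma> permutes A \<and> (\<lambda>_. True) (card {x\<in>A. \<sigma> x = x})} = (\<Sum>F\<in>{F. F \<subseteq> A \<and> (\<lambda>_. True) (card F)}. der (A - F))"
    by (rule part[OF less.prems])
  then have "fact ?n = (\<Sum>F\<in>Pow A. der (A - F))"
    using card_permutations[OF refl less.prems] by (simp add: Pow_def)
  then have "(fact ?n :: real) = (\<Sum>F\<in>Pow A. real (der (A - F)))"
    by (metis of_nat_fact of_nat_sum)
  also have "\<dots> = real (der A) + (\<Sum>F\<in>Pow A - {{}}. real (der (A - F)))"
    using less.prems by (subst sum.remove[of _ "{}"]) auto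
  also have "(\<Sum>F\<in>Pow A - {{}}. real (der (A - F))) = (\<Sum>F\<in>Pow A - {{}}. g (card F))"
  proof (rule sum.cong)
    fix F assume F: "F \<in> Pow A - {{}}"
    then have fF: "finite F" using less.prems finite_subset by auto
    have cF: "card (A - F) = ?n - card F" using F fF by (simp add: card_Diff_subset)
    have "card F > 0" using F fF by auto
    moreover have "card F \<le> ?n" using F less.prems by (simp add: card_mono)
    ultimately have "card (A - F) < ?n" using cF by linarith
    then show "real (der (A - F)) = g (card F)"
      using less.hyps[of "A - F"] less.prems cF by (simp add: g_def)
  qed simp
  also have "(\<Sum>F\<in>Pow A - {{}}. g (card F)) = (\<Sum>F\<in>Pow A. g (card F)) - g 0"
    using less.prems by (subst sum.remove[of "Pow A" "{}"]) auto
  also have "(\<Sum>F\<in>Pow A. g (card F)) = fact ?n"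
    using sum_pow_card[OF less.prems, of g] L5[of ?n] by (simp add: g_def)
  finally show ?case by (simp add: g_def)
qed



lemma pmf_fix:
  assumes "k \<le> N"
  shows "pmf (fixpt_pmf N) k = ss (N-k) / fact k"
proof -
  let ?A = "{1..N::nat}"
  let ?S = "{\<sigma>::nat\<Rightarrow>nat. \<sigma> permutes ?A}"
  let ?f = "\<lambda>\<sigma>. card {i \<in> ?A. \<sigma> i = i}"
  have fS: "finite ?S" by (rule finite_permutations) simp
  have neS: "?S \<noteq> {}" using permutes_id by blast
  have cS: "card ?S = fact N" using card_permutations[of ?A N] by simp
  have "pmf (fixpt_pmf N) k = real (card (?S \<inter> ?f -` {k})) / real (card ?S)"
    unfolding fixpt_pmf_def pmf_map using measure_pmf_of_set[OF neS fS] by simp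
  also have "?S \<inter> ?f -` {k} = {\<sigma>. \<sigma> permutes ?A \<and> (\<lambda>x. x = k) (card {x\<in>?A. \<sigma> x = x})}" by auto
  also have "card \<dots> = (\<Sum>F\<in>{F. F \<subseteq> ?A \<and> card F = k}. der (?A - F))"
    by (rule part) simp
  also have "real \<dots> = (\<Sum>F\<in>{F. F \<subseteq> ?A \<and> card F = k}. fact (N-k) * ss (N-k))"
    unfolding of_nat_sum
  proof (rule sum.cong)
    fix F assume F: "F \<in> {F. F \<subseteq> ?A \<and> card F = k}"
    then have "finite F" using finite_subset by blast
    then have "card (?A - F) = N - k" using F by (simp add: card_Diff_subset)
    then show "real (der (?A - F)) = fact (N-k) * ss (N-k)" using der_formula[of "?A - F"] by simp
  qed simp
  also have "\<dots> = real (N choose k) * (fact (N-k) * ss (N-k))"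
    using n_subsets[of ?A k] by simp
  finally have "pmf (fixpt_pmf N) k = real (N choose k) * (fact (N-k) * ss (N-k)) / fact N"
    using cS by simp
  also have "\<dots> = ss (N-k) / fact k" using assms by (simp add: binomial_fact field_simps)
  finally show ?thesis .
qed

lemma ss_approx: "\<bar>ss m - exp (-1)\<bar> \<le> 3 / fact (Suc m)"
proof -
  obtain t where t: "\<bar>t\<bar> \<le> \<bar>-1::real\<bar>"
    and e: "exp (-1) = (\<Sum>j<Suc m. (-1::real)^j / fact j) + exp t / fact (Suc m) * (-1)^(Suc m)"
    using Maclaurin_exp_le[of "-1::real" "Suc m"] by blast
  have "(\<Sum>j<Suc m. (-1::real)^j / fact j) = ss m" by (simp add: ss_def lessThan_Suc_atMost)
  then have "\<bar>ss m - exp (-1)\<bar> = exp t / fact (Suc m)" using e by (simp add: abs_mult)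
  also have "exp t \<le> 3" using t exp_le by (metis abs_le_D1 abs_minus_cancel abs_one exp_le_cancel_iff order_trans)
  then have "exp t / fact (Suc m) \<le> 3 / fact (Suc m)" by (simp add: divide_right_mono)
  finally show ?thesis .
qed

lemma exp_m1_ge: "exp (-1::real) \<ge> 1/3"
proof -
  have "exp (-1::real) = 1 / exp 1" by (simp add: exp_minus field_simps)
  then show ?thesis using exp_le by (simp add: frac_le)
qed

lemma ss_ge: "m \<ge> 4 \<Longrightarrow> ss m \<ge> 1/4"
proof -
  assume m: "m \<ge> 4"
  have "fact (Suc 4) \<le> (fact (Suc m) :: real)" using m by (intro fact_mono) simp
  then have f: "fact (Suc m) \<ge> (120::real)" by (simp add: fact_numeral)
  have "3 / fact (Suc m) \<le> (3::real) / 120" using f by (intro divide_left_mono) auto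
  then show ?thesis using ss_approx[of m] exp_m1_ge by linarith
qed

lemma sum_inv_fact: "(\<Sum>k\<le>m. 1 / (fact k * fact (m-k)) :: real) = 2^m / fact m"
proof -
  have "(\<Sum>k\<le>m. 1 / (fact k * fact (m-k)) :: real) = (\<Sum>k\<le>m. real (m choose k) / fact m)"
    by (rule sum.cong) (auto simp: binomial_fact)
  also have "\<dots> = real (\<Sum>k\<le>m. m choose k) / fact m" by (simp add: sum_divide_distrib)
  also have "\<dots> = 2^m / fact m" by (simp add: choose_row_sum)
  finally show ?thesis .
qed



lemma prob_on_support:
  assumes "finite S" "set_pmf p \<subseteq> S"
  shows "measure_pmf.prob p A = (\<Sum>k\<in>A \<inter> S. pmf p k)"
proof -
  have "measure_pmf.prob p A = measure_pmf.prob p (A \<inter> set_pmf p)" by (simp add: measure_Int_set_pmf)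
  also have "A \<inter> set_pmf p = (A \<inter> S) \<inter> set_pmf p" using assms by auto
  also have "measure_pmf.prob p \<dots> = measure_pmf.prob p (A \<inter> S)" by (simp add: measure_Int_set_pmf)
  also have "\<dots> = (\<Sum>k\<in>A \<inter> S. pmf p k)" using assms by (simp add: measure_measure_pmf_finite)
  finally show ?thesis .
qed

lemma set_pmf_meets:
  assumes "finite S" "(\<Sum>k\<in>S. pmf p k) > 0"
  shows "set_pmf p \<inter> S \<noteq> {}"
proof
  assume "set_pmf p \<inter> S = {}"
  then have "\<forall>k\<in>S. pmf p k = 0" by (auto simp: set_pmf_iff)
  then have "(\<Sum>k\<in>S. pmf p k) = 0" by simp
  then show False using assms by simp
qed

lemma tv_cond_bound:
  fixes p q :: "'a pmf"
  assumes fS: "finite S" and P: "(\<Sum>k\<in>S. pmf p k) > 0" and Q: "(\<Sum>k\<in>S. pmf q k) > 0"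
  shows "tv_dist (cond_pmf p S) (cond_pmf q S) \<le> 2 * (\<Sum>k\<in>S. \<bar>pmf p k - pmf q k\<bar>) / (\<Sum>k\<in>S. pmf p k)"
proof -
  define PP where "PP = (\<Sum>k\<in>S. pmf p k)"
  define QQ where "QQ = (\<Sum>k\<in>S. pmf q k)"
  define \<delta> where "\<delta> = (\<Sum>k\<in>S. \<bar>pmf p k - pmf q k\<bar>)"
  have Pp: "PP > 0" "QQ > 0" using P Q by (simp_all add: PP_def QQ_def)
  have mp: "set_pmf p \<inter> S \<noteq> {}" and mq: "set_pmf q \<inter> S \<noteq> {}"
    using set_pmf_meets[OF fS P] set_pmf_meets[OF fS Q] by auto
  have mP: "measure_pmf.prob p S = PP" using fS by (simp add: measure_measure_pmf_finite PP_def)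
  have mQ: "measure_pmf.prob q S = QQ" using fS by (simp add: measure_measure_pmf_finite QQ_def)
  have cp: "k \<in> S \<Longrightarrow> pmf (cond_pmf p S) k = pmf p k / PP" for k using pmf_cond[OF mp] mP by simp
  have cq: "k \<in> S \<Longrightarrow> pmf (cond_pmf q S) k = pmf q k / QQ" for k using pmf_cond[OF mq] mQ by simp
  have sp: "set_pmf (cond_pmf p S) \<subseteq> S" using set_cond_pmf[OF mp] by auto
  have sq: "set_pmf (cond_pmf q S) \<subseteq> S" using set_cond_pmf[OF mq] by auto
  have dQP: "\<bar>QQ - PP\<bar> \<le> \<delta>"
  proof -
    have "QQ - PP = (\<Sum>k\<in>S. pmf q k - pmf p k)" by (simp add: QQ_def PP_def sum_subtractf)
    also have "\<bar>\<dots>\<bar> \<le> (\<Sum>k\<in>S. \<bar>pmf q k - pmf p k\<bar>)" by (rule sum_abs)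
    also have "\<dots> = \<delta>" unfolding \<delta>_def by (rule sum.cong) auto
    finally show ?thesis .
  qed
  have pt: "\<bar>pmf p k / PP - pmf q k / QQ\<bar> \<le> \<bar>pmf p k - pmf q k\<bar> / PP + pmf q k * \<bar>QQ - PP\<bar> / (PP * QQ)" for k
  proof -
    have "pmf p k / PP - pmf q k / QQ = (pmf p k - pmf q k) / PP + pmf q k * (QQ - PP) / (PP * QQ)"
      using Pp by (simp add: field_simps)
    also have "\<bar>\<dots>\<bar> \<le> \<bar>(pmf p k - pmf q k) / PP\<bar> + \<bar>pmf q k * (QQ - PP) / (PP * QQ)\<bar>" by (rule abs_triangle_ineq)
    also have "\<dots> = \<bar>pmf p k - pmf q k\<bar> / PP + pmf q k * \<bar>QQ - PP\<bar> / (PP * QQ)"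
      using Pp by (simp add: abs_mult abs_divide)
    finally show ?thesis .
  qed
  have total: "(\<Sum>k\<in>S. \<bar>pmf p k / PP - pmf q k / QQ\<bar>) \<le> 2 * \<delta> / PP"
  proof -
    have "(\<Sum>k\<in>S. \<bar>pmf p k / PP - pmf q k / QQ\<bar>) \<le> (\<Sum>k\<in>S. \<bar>pmf p k - pmf q k\<bar> / PP + pmf q k * \<bar>QQ - PP\<bar> / (PP * QQ))"
      by (rule sum_mono) (rule pt)
    also have "\<dots> = \<delta> / PP + QQ * \<bar>QQ - PP\<bar> / (PP * QQ)"
      by (simp add: sum.distrib \<delta>_def QQ_def sum_divide_distrib sum_distrib_right)
    also have "\<dots> = \<delta> / PP + \<bar>QQ - PP\<bar> / PP" using Pp by simp
    also have "\<dots> \<le> \<delta> / PP + \<delta> / PP" by (intro add_left_mono divide_right_mono) (use dQP Pp in auto)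
    also have "\<dots> = 2 * \<delta> / PP" by (simp add: field_simps)
    finally show ?thesis .
  qed
  have "\<bar>measure_pmf.prob (cond_pmf p S) A - measure_pmf.prob (cond_pmf q S) A\<bar> \<le> 2 * \<delta> / PP" for A
  proof -
    have "measure_pmf.prob (cond_pmf p S) A - measure_pmf.prob (cond_pmf q S) A
          = (\<Sum>k\<in>A \<inter> S. pmf p k / PP - pmf q k / QQ)"
      using prob_on_support[OF fS sp, of A] prob_on_support[OF fS sq, of A] cp cq
      by (simp add: sum_subtractf)
    also have "\<bar>\<dots>\<bar> \<le> (\<Sum>k\<in>A \<inter> S. \<bar>pmf p k / PP - pmf q k / QQ\<bar>)" by (rule sum_abs)
    also have "\<dots> \<le> (\<Sum>k\<in>S. \<bar>pmf p k / PP - pmf q k / QQ\<bar>)" using fS by (intro sum_mono2) auto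
    finally show ?thesis using total by linarith
  qed
  then have "tv_dist (cond_pmf p S) (cond_pmf q S) \<le> 2 * \<delta> / PP"
    unfolding tv_dist_def by (intro cSUP_least) auto
  then show ?thesis by (simp add: \<delta>_def PP_def)
qed

lemma tv_ge_point:
  "tv_dist p q \<ge> \<bar>pmf p k - pmf q k\<bar>"
proof -
  have "\<bar>measure_pmf.prob p A - measure_pmf.prob q A\<bar> \<le> 1" for A
    using measure_pmf.prob_le_1[of p A] measure_pmf.prob_le_1[of q A]
      measure_nonneg[of p A] measure_nonneg[of q A] by linarith
  then have "bdd_above (range (\<lambda>A. \<bar>measure_pmf.prob p A - measure_pmf.prob q A\<bar>))"
    by (intro bdd_aboveI2) auto
  then have "\<bar>measure_pmf.prob p {k} - measure_pmf.prob q {k}\<bar> \<le> tv_dist p q"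
    unfolding tv_dist_def by (rule cSUP_upper[OF UNIV_I])
  then show ?thesis by (simp add: measure_pmf_single)
qed



lemma cond_val:
  fixes p :: "'a pmf"
  assumes "finite S" "(\<Sum>k\<in>S. pmf p k) > 0" "k \<in> S"
  shows "pmf (cond_pmf p S) k = pmf p k / (\<Sum>k\<in>S. pmf p k)"
  using pmf_cond[OF set_pmf_meets[OF assms(1,2)]] assms by (simp add: measure_measure_pmf_finite)

lemma pois: "pmf (poisson_pmf 1) k = exp (-1) / fact k"
  by (simp add: pmf_poisson)

lemma P_ge: "N \<ge> 9 \<Longrightarrow> (\<Sum>k\<in>{0..N-4}. pmf (fixpt_pmf N) k) \<ge> 1/4"
proof -
  assume N: "N \<ge> 9"
  have "pmf (fixpt_pmf N) 0 \<le> (\<Sum>k\<in>{0..N-4}. pmf (fixpt_pmf N) k)"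
    by (rule member_le_sum) auto
  moreover have "pmf (fixpt_pmf N) 0 = ss N" using pmf_fix[of 0 N] by simp
  moreover have "ss N \<ge> 1/4" using N by (intro ss_ge) simp
  ultimately show ?thesis by linarith
qed

lemma Q_pos: "(\<Sum>k\<in>{0..N-4}. pmf (poisson_pmf 1) k) > 0"
proof -
  have "pmf (poisson_pmf 1) 0 \<le> (\<Sum>k\<in>{0..N-4}. pmf (poisson_pmf 1) k)"
    by (rule member_le_sum) auto
  moreover have "pmf (poisson_pmf 1) 0 > 0" by (simp add: pois)
  ultimately show ?thesis by linarith
qed

lemma delta_bound:
  assumes "N \<ge> 9"
  shows "(\<Sum>k\<in>{0..N-4}. \<bar>pmf (fixpt_pmf N) k - pmf (poisson_pmf 1) k\<bar>) \<le> 3 * 2^(Suc N) / fact (Suc N)"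
proof -
  have "(\<Sum>k\<in>{0..N-4}. \<bar>pmf (fixpt_pmf N) k - pmf (poisson_pmf 1) k\<bar>)
        \<le> (\<Sum>k\<in>{0..N-4}. 3 * (1 / (fact k * fact (Suc N - k))))"
  proof (rule sum_mono)
    fix k assume "k \<in> {0..N-4}"
    then have k: "k \<le> N" by auto
    have "\<bar>pmf (fixpt_pmf N) k - pmf (poisson_pmf 1) k\<bar> = \<bar>ss (N-k) - exp (-1)\<bar> / fact k"
      using k by (simp add: pmf_fix pois flip: diff_divide_distrib)
    also have "\<dots> \<le> (3 / fact (Suc (N-k))) / fact k" by (intro divide_right_mono ss_approx) simp
    also have "Suc (N - k) = Suc N - k" using k by simp
    finally show "\<bar>pmf (fixpt_pmf N) k - pmf (poisson_pmf 1) k\<bar> \<le> 3 * (1 / (fact k * fact (Suc N - k)))"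
      by (simp add: field_simps)
  qed
  also have "\<dots> \<le> (\<Sum>k\<le>Suc N. 3 * (1 / (fact k * fact (Suc N - k))))"
    by (intro sum_mono2) auto
  also have "\<dots> = 3 * (\<Sum>k\<le>Suc N. 1 / (fact k * fact (Suc N - k)))"
    by (rule sum_distrib_left[symmetric])
  also have "\<dots> = 3 * (2^(Suc N) / fact (Suc N))"
    by (simp only: sum_inv_fact)
  finally show ?thesis by simp
qed

lemma main_bound:
  assumes N: "N \<ge> 9"
  shows "tv_dist (fixpt_cond_pmf N) (poisson_cond_pmf N) \<le> 48 * 2^N / (real (Suc N) * fact N)"
proof -
  let ?S = "{0..N-4}"
  define P where "P = (\<Sum>k\<in>?S. pmf (fixpt_pmf N) k)"
  define \<delta> where "\<delta> = (\<Sum>k\<in>?S. \<bar>pmf (fixpt_pmf N) k - pmf (poisson_pmf 1) k\<bar>)"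
  have P4: "P \<ge> 1/4" using P_ge[OF N] by (simp add: P_def)
  have d0: "\<delta> \<ge> 0" by (simp add: \<delta>_def sum_nonneg)
  have "tv_dist (fixpt_cond_pmf N) (poisson_cond_pmf N) \<le> 2 * \<delta> / P"
    unfolding fixpt_cond_pmf_def poisson_cond_pmf_def \<delta>_def P_def
    by (rule tv_cond_bound) (use P4 Q_pos in \<open>auto simp: P_def\<close>)
  also have "\<dots> \<le> 2 * \<delta> / (1/4)" using P4 d0 by (intro divide_left_mono) auto
  also have "\<dots> = 8 * \<delta>" by simp
  also have "\<dots> \<le> 8 * (3 * 2^(Suc N) / fact (Suc N))" using delta_bound[OF N] by (simp add: \<delta>_def)
  also have "\<dots> = 48 * 2^N / (real (Suc N) * fact N)" by (simp add: field_simps)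
  finally show ?thesis .
qed

lemma tv_pos:
  assumes N: "N \<ge> 9"
  shows "tv_dist (fixpt_cond_pmf N) (poisson_cond_pmf N) > 0"
proof (rule ccontr)
  let ?S = "{0..N-4}"
  define P where "P = (\<Sum>k\<in>?S. pmf (fixpt_pmf N) k)"
  define Q where "Q = (\<Sum>k\<in>?S. pmf (poisson_pmf 1) k)"
  have P0: "P > 0" using P_ge[OF N] by (simp add: P_def)
  have Q0: "Q > 0" using Q_pos by (simp add: Q_def)
  assume "\<not> ?thesis"
  then have "\<bar>pmf (fixpt_cond_pmf N) k - pmf (poisson_cond_pmf N) k\<bar> \<le> 0" for k
    using tv_ge_point[where p="fixpt_cond_pmf N" and q="poisson_cond_pmf N" and k=k] by linarith
  then have eq: "pmf (fixpt_cond_pmf N) k = pmf (poisson_cond_pmf N) k" for k by simp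
  have val: "ss (N-k) / P = exp (-1) / Q" if "k \<in> ?S" for k
  proof -
    have "pmf (fixpt_cond_pmf N) k = ss (N-k) / fact k / P"
      unfolding fixpt_cond_pmf_def using that P0
      by (subst cond_val) (auto simp: P_def pmf_fix)
    moreover have "pmf (poisson_cond_pmf N) k = exp (-1) / fact k / Q"
      unfolding poisson_cond_pmf_def using that Q0
      by (subst cond_val) (auto simp: Q_def pois)
    ultimately have "ss (N-k) / fact k / P = exp (-1) / fact k / Q" using eq by simp
    then have "(ss (N-k)/P)/fact k = (exp(-1)/Q)/fact k" by (simp add: divide_divide_eq_left mult.commute)
    then show ?thesis by (subst (asm) divide_cancel_right) simp
  qed
  have "ss (N - (N-4)) / P = ss (N - (N-5)) / P" using val[of "N-4"] val[of "N-5"] by simp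
  moreover have "N - (N-4) = 4" "N - (N-5) = 5" using N by auto
  ultimately have "ss 4 = ss 5" using P0 by simp
  moreover have "ss 5 = ss 4 + (-1)^5 / fact 5" using ss_Suc[of 4] by (simp add: numeral_eq_Suc)
  ultimately show False by (simp add: fact_numeral)
qed

lemma pow_fact_le_exp: "real N ^ N / fact N \<le> exp (real N)"
proof -
  obtain t where e: "exp (real N) = (\<Sum>m<Suc N. real N ^ m / fact m) + exp t / fact (Suc N) * real N ^ (Suc N)"
    using Maclaurin_exp_le[of "real N" "Suc N"] by blast
  have "real N ^ N / fact N \<le> (\<Sum>m<Suc N. real N ^ m / fact m)"
    by (rule member_le_sum[where f = "\<lambda>m. real N ^ m / fact m"]) auto
  moreover have "exp t / fact (Suc N) * real N ^ (Suc N) \<ge> 0" by simp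
  ultimately show ?thesis using e by linarith
qed

lemma part2:
  "limsup (\<lambda>N::nat. ereal (ln (tv_dist (fixpt_cond_pmf N) (poisson_cond_pmf N))
                                   / (real N * ln (real N)))) \<le> -1"
proof -
  define g where "g N = (ln 48 + real N * ln 2 + real N - real N * ln (real N)) / (real N * ln (real N))" for N :: nat
  have lim: "g \<longlonglongrightarrow> -1" unfolding g_def by real_asymp
  have ev: "eventually (\<lambda>N. ereal (ln (tv_dist (fixpt_cond_pmf N) (poisson_cond_pmf N)) / (real N * ln (real N))) \<le> ereal (g N)) sequentially"
    unfolding eventually_sequentially
  proof (intro exI allI impI)
    fix N :: nat assume N: "N \<ge> 9"
    let ?T = "tv_dist (fixpt_cond_pmf N) (poisson_cond_pmf N)"
    have T0: "?T > 0" using tv_pos[OF N] .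
    have Npos: "real N > 0" using N by simp
    have "?T \<le> 48 * 2^N / (real (Suc N) * fact N)" using main_bound[OF N] .
    also have "\<dots> \<le> 48 * 2^N / fact N" by (intro divide_left_mono) auto
    also have "\<dots> = 48 * 2^N * (1 / fact N)" by simp
    also have "\<dots> \<le> 48 * 2^N * (exp (real N) / real N ^ N)"
      using pow_fact_le_exp[of N] Npos by (intro mult_left_mono) (auto simp: field_simps)
    finally have TB: "?T \<le> 48 * 2^N * (exp (real N) / real N ^ N)" .
    have "ln ?T \<le> ln (48 * 2^N * (exp (real N) / real N ^ N))" using TB T0 by simp
    also have "\<dots> = ln 48 + real N * ln 2 + real N - real N * ln (real N)"
      using Npos by (simp add: ln_mult ln_div ln_realpow)
    finally have "ln ?T \<le> ln 48 + real N * ln 2 + real N - real N * ln (real N)" .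
    moreover have "real N * ln (real N) > 0" using N by simp
    ultimately have "ln ?T / (real N * ln (real N)) \<le> g N" unfolding g_def by (intro divide_right_mono) auto
    then show "ereal (ln ?T / (real N * ln (real N))) \<le> ereal (g N)" by simp
  qed
  have "limsup (\<lambda>N. ereal (ln (tv_dist (fixpt_cond_pmf N) (poisson_cond_pmf N)) / (real N * ln (real N)))) \<le> limsup (\<lambda>N. ereal (g N))"
    by (rule Limsup_mono[OF ev])
  also have "limsup (\<lambda>N. ereal (g N)) = ereal (-1)"
    by (rule lim_imp_Limsup) (simp_all add: lim)
  finally show ?thesis by (simp add: one_ereal_def)
qed


theorem mainTheorem12:
  shows "(\<exists>c::real. c > 0 \<and>
           (\<exists>N0::nat. \<forall>N \<ge> N0. \<forall>n::nat. n \<ge> 1 \<longrightarrow>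
              tv_dist (fixpt_cond_pmf N) (poisson_cond_pmf N)
                \<le> 5 * 2 ^ N * real n / fact N + 2 * exp (1 - c * real n / real N ^ 3)))
         \<and> limsup (\<lambda>N::nat. ereal (ln (tv_dist (fixpt_cond_pmf N) (poisson_cond_pmf N))
                                   / (real N * ln (real N)))) \<le> -1"
proof (intro conjI exI allI impI)
  show "(1::real) > 0" by simp
  fix N n :: nat assume N: "N \<ge> 9" and n: "n \<ge> 1"
  have "tv_dist (fixpt_cond_pmf N) (poisson_cond_pmf N) \<le> 48 * 2^N / (real (Suc N) * fact N)"
    using main_bound[OF N] .
  also have "\<dots> \<le> 5 * 2^N / fact N"
  proof -
    have "48 * 2^N / (real (Suc N) * fact N) = (48 / real (Suc N)) * (2^N / fact N)" by simp
    also have "\<dots> \<le> 5 * (2^N / fact N)"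
      using N by (intro mult_right_mono) (auto simp: field_simps)
    finally show ?thesis by simp
  qed
  also have "\<dots> \<le> 5 * 2^N * real n / fact N"
    using n by (intro divide_right_mono) auto
  also have "\<dots> \<le> 5 * 2 ^ N * real n / fact N + 2 * exp (1 - 1 * real n / real N ^ 3)" by simp
  finally show "tv_dist (fixpt_cond_pmf N) (poisson_cond_pmf N)
                \<le> 5 * 2 ^ N * real n / fact N + 2 * exp (1 - 1 * real n / real N ^ 3)" .
next
  show "limsup (\<lambda>N::nat. ereal (ln (tv_dist (fixpt_cond_pmf N) (poisson_cond_pmf N))
                                   / (real N * ln (real N)))) \<le> -1" by (rule part2)
qed

end
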